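(* Let $G=(V,E)$ be a graph and $w\in\mathbb{R}^E$ with $w(E)=\sum_{e\in E}w_e\ge 0$ and $\mathrm{mc}(G,w)>0$. Then $\mathrm{sdp}_{GW}(G,w)\le \kappa(G)\cdot \mathrm{mc}(G,w)$.
   Context: Let $V=[n]$. For $w\in\mathbb{R}^E$, $\mathrm{mc}(G,w)=\max_{x\in\{\pm1\}^n}\frac12\sum_{ij\in E}w_{ij}(1-x_ix_j)$ (max-cut), and $\mathrm{sdp}_{GW}(G,w)=\max_{X\in\mathcal{E}_n}\frac14\langle L_{G,w},X\rangle$, where $\mathcal{E}_n=\{X\succeq 0: X_{ii}=1\}$ and $L_{G,w}$ is the Laplacian matrix with $(i,i)$ entry $\sum_{j:ij\in E}w_{ij}$, $(i,j)$ entry $-w_{ij}$ if $ij\in E$ and $0$ otherwise. With $\mathrm{ip}(G,w)=\max_{x\in\{\pm1\}^n}\sum_{ij\in E}w_{ij}x_ix_j$ and $\mathrm{sdp}(G,w)=\max\sum_{ij\in E}w_{ij}u_i^Tu_j$ over unit vectors $u_i\in\mathbb{R}^n$, the Grothendieck constant is $\kappa(G)=\sup_{w\in\mathbb{R}^E}\mathrm{sdp}(G,w)/\mathrm{ip}(G,w)$. *)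

theory Defs
  imports "HOL-Analysis.Analysis"
begin

(* Vertex set V = UNIV :: 'n set (a finite type, playing the role of [n]).
   A graph is given by its edge set E :: 'n set set, each edge a 2-element set {i,j}.
   Weights w :: 'n set \<Rightarrow> real; only the values on E matter (w \<in> R^E). *)

definition simple_graph :: "'n::finite set set \<Rightarrow> bool" where
  "simple_graph E \<longleftrightarrow> (\<forall>e\<in>E. card e = 2)"

(* sum over edges ij \<in> E of f i j, for symmetric f: each edge counted once *)
definition edge_sum :: "'n::finite set set \<Rightarrow> ('n \<Rightarrow> 'n \<Rightarrow> real) \<Rightarrow> real" where
  "edge_sum E f = (1/2) * (\<Sum>i\<in>UNIV. \<Sum>j\<in>UNIV. if {i,j} \<in> E then f i j else 0)"

definition sign_vectors :: "('n::finite \<Rightarrow> real) set" where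
  "sign_vectors = {x. \<forall>i. x i \<in> {-1, 1}}"

definition mc :: "'n::finite set set \<Rightarrow> ('n set \<Rightarrow> real) \<Rightarrow> real" where
  "mc E w = Max ((\<lambda>x. (1/2) * edge_sum E (\<lambda>i j. w {i,j} * (1 - x i * x j))) ` sign_vectors)"

definition ip :: "'n::finite set set \<Rightarrow> ('n set \<Rightarrow> real) \<Rightarrow> real" where
  "ip E w = Max ((\<lambda>x. edge_sum E (\<lambda>i j. w {i,j} * (x i * x j))) ` sign_vectors)"

definition sdp :: "'n::finite set set \<Rightarrow> ('n set \<Rightarrow> real) \<Rightarrow> real" where
  "sdp E w = Sup ((\<lambda>u. edge_sum E (\<lambda>i j. w {i,j} * (u i \<bullet> u j)))
                 ` {u :: 'n \<Rightarrow> real^'n. \<forall>i. norm (u i) = 1})"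

definition kappa :: "'n::finite set set \<Rightarrow> real" where
  "kappa E = Sup ((\<lambda>w. sdp E w / ip E w) ` (UNIV :: ('n set \<Rightarrow> real) set))"

definition psd :: "real^'n^'n \<Rightarrow> bool" where
  "psd X \<longleftrightarrow> transpose X = X \<and> (\<forall>x. 0 \<le> x \<bullet> (X *v x))"

definition elliptope :: "(real^'n::finite^'n) set" where
  "elliptope = {X. psd X \<and> (\<forall>i. X $ i $ i = 1)}"

definition laplacian :: "'n::finite set set \<Rightarrow> ('n set \<Rightarrow> real) \<Rightarrow> real^'n^'n" where
  "laplacian E w = (\<chi> i j. if i = j then (\<Sum>k\<in>{k. {i,k} \<in> E}. w {i,k})
                           else if {i,j} \<in> E then - w {i,j} else 0)"

definition frob :: "real^'n::finite^'n \<Rightarrow> real^'n^'n \<Rightarrow> real" where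
  "frob A B = (\<Sum>i\<in>UNIV. \<Sum>j\<in>UNIV. A $ i $ j * B $ i $ j)"

definition sdp_GW :: "'n::finite set set \<Rightarrow> ('n set \<Rightarrow> real) \<Rightarrow> real" where
  "sdp_GW E w = Sup ((\<lambda>X. (1/4) * frob (laplacian E w) X) ` elliptope)"

end

theory Submission
  imports Defs
begin


lemma sv_PiE: "(sign_vectors :: ('n::finite \<Rightarrow> real) set) = PiE UNIV (\<lambda>_. {-1,1})"
  by (auto simp: sign_vectors_def PiE_def Pi_def extensional_def)

lemma sv_finite: "finite (sign_vectors :: ('n::finite \<Rightarrow> real) set)"
  unfolding sv_PiE by (rule finite_PiE) auto

lemma sv_one: "(\<lambda>_. 1) \<in> (sign_vectors :: ('n::finite \<Rightarrow> real) set)"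
  by (auto simp: sign_vectors_def)

lemma sv_ne: "(sign_vectors :: ('n::finite \<Rightarrow> real) set) \<noteq> {}"
  using sv_one by blast

lemma sv_sq: "x \<in> sign_vectors \<Longrightarrow> x i * x i = 1"
  by (auto simp: sign_vectors_def dest: spec[of _ i])

lemma sv_abs: "x \<in> sign_vectors \<Longrightarrow> \<bar>x i\<bar> = 1"
  by (auto simp: sign_vectors_def dest: spec[of _ i])

definition flip :: "'n \<Rightarrow> ('n \<Rightarrow> real) \<Rightarrow> ('n \<Rightarrow> real)" where
  "flip k y = y(k := - y k)"

lemma flip_sv: "y \<in> sign_vectors \<Longrightarrow> flip k y \<in> sign_vectors"
  by (auto simp: sign_vectors_def flip_def)

lemma flip_flip: "flip k (flip k y) = y"
  by (auto simp: flip_def)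

lemma flip_sum_zero:
  fixes g :: "('n::finite \<Rightarrow> real) \<Rightarrow> real"
  assumes "\<And>y. y \<in> sign_vectors \<Longrightarrow> g (flip k y) = - g y"
  shows "(\<Sum>y\<in>sign_vectors. g y) = 0"
proof -
  have "(\<Sum>y\<in>sign_vectors. g y) = (\<Sum>y\<in>sign_vectors. g (flip k y))"
    by (rule sum.reindex_bij_witness[where i="flip k" and j="flip k"])
       (auto simp: flip_flip flip_sv)
  also have "\<dots> = - (\<Sum>y\<in>sign_vectors. g y)"
    using assms by (simp add: sum_negf)
  finally show ?thesis by simp
qed

lemma sum_prod2:
  assumes "i \<noteq> j"
  shows "(\<Sum>y\<in>(sign_vectors::('n::finite \<Rightarrow> real) set). y i * y j) = 0"
  by (rule flip_sum_zero[where k=i]) (use assms in \<open>auto simp: flip_def\<close>)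

lemma sum_prod4:
  assumes "i \<noteq> j" "a \<noteq> b"
  shows "(\<Sum>y\<in>(sign_vectors::('n::finite \<Rightarrow> real) set). y i * y j * (y a * y b))
     = (if (i = a \<and> j = b) \<or> (i = b \<and> j = a) then real (card (sign_vectors::('n \<Rightarrow> real) set)) else 0)"
proof (cases "(i = a \<and> j = b) \<or> (i = b \<and> j = a)")
  case True
  then have "\<And>y. y \<in> (sign_vectors::('n::finite \<Rightarrow> real) set) \<Longrightarrow> y i * y j * (y a * y b) = 1"
  proof -
    fix y :: "'n \<Rightarrow> real" assume "y \<in> sign_vectors"
    then have "y a * y a = 1" "y b * y b = 1" using sv_sq by auto
    then show "y i * y j * (y a * y b) = 1" using True
      by (auto simp: algebra_simps)
  qed
  then show ?thesis using True by simp
next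
  case False
  then have "i \<notin> {a,b} \<or> j \<notin> {a,b}" using assms by auto
  then show ?thesis
  proof
    assume h: "i \<notin> {a,b}"
    have "(\<Sum>y\<in>(sign_vectors::('n::finite \<Rightarrow> real) set). y i * y j * (y a * y b)) = 0"
      by (rule flip_sum_zero[where k=i]) (use h assms in \<open>auto simp: flip_def\<close>)
    then show ?thesis using False by auto
  next
    assume h: "j \<notin> {a,b}"
    have "(\<Sum>y\<in>(sign_vectors::('n::finite \<Rightarrow> real) set). y i * y j * (y a * y b)) = 0"
      by (rule flip_sum_zero[where k=j]) (use h assms in \<open>auto simp: flip_def\<close>)
    then show ?thesis using False by auto
  qed
qed



lemma sg_edge: "simple_graph E \<Longrightarrow> {i,j} \<in> E \<Longrightarrow> i \<noteq> j"
  by (auto simp: simple_graph_def dest!: bspec[of _ _ "{i,j}"])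

lemma swap3:
  fixes F :: "'y \<Rightarrow> 'i \<Rightarrow> 'j \<Rightarrow> real"
  assumes "finite Y" "finite I" "finite J"
  shows "(\<Sum>y\<in>Y. c * (\<Sum>i\<in>I. \<Sum>j\<in>J. F y i j)) = c * (\<Sum>i\<in>I. \<Sum>j\<in>J. \<Sum>y\<in>Y. F y i j)"
proof -
  have "(\<Sum>y\<in>Y. (\<Sum>i\<in>I. \<Sum>j\<in>J. F y i j)) = (\<Sum>i\<in>I. \<Sum>y\<in>Y. \<Sum>j\<in>J. F y i j)"
    by (rule sum.swap)
  also have "\<dots> = (\<Sum>i\<in>I. \<Sum>j\<in>J. \<Sum>y\<in>Y. F y i j)"
    by (rule sum.cong[OF refl], rule sum.swap)
  finally show ?thesis by (simp add: sum_distrib_left[symmetric])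
qed

abbreviation fv :: "'n::finite set set \<Rightarrow> ('n set \<Rightarrow> real) \<Rightarrow> ('n \<Rightarrow> real) \<Rightarrow> real" where
  "fv E v y \<equiv> edge_sum E (\<lambda>i j. v {i,j} * (y i * y j))"

lemma sum_fv_zero:
  fixes E :: "'n::finite set set"
  assumes "simple_graph E"
  shows "(\<Sum>y\<in>sign_vectors. fv E v y) = 0"
proof -
  have "(\<Sum>y\<in>sign_vectors. fv E v y) = 1/2 * (\<Sum>i\<in>UNIV. \<Sum>j\<in>UNIV. \<Sum>y\<in>sign_vectors.
           (if {i,j} \<in> E then v {i,j} * (y i * y j) else 0))"
    unfolding edge_sum_def by (rule swap3) (auto simp: sv_finite)
  also have "\<dots> = 0"
  proof -
    have "(\<Sum>y\<in>sign_vectors. (if {i,j} \<in> E then v {i,j} * (y i * y j) else 0)) = 0" for i j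
    proof (cases "{i,j} \<in> E")
      case True
      then have "i \<noteq> j" using sg_edge assms by blast
      then show ?thesis using True by (simp add: sum_distrib_left[symmetric] sum_prod2)
    qed simp
    then show ?thesis by simp
  qed
  finally show ?thesis .
qed

lemma delta2: "(\<Sum>i\<in>(UNIV::'a::finite set). \<Sum>j\<in>(UNIV::'a set). if i = a \<and> j = b then c else 0) = (c::real)"
proof -
  have "(\<Sum>j\<in>(UNIV::'a set). if i = a \<and> j = b then c else 0) = (if i = a then c else 0)" for i
    by (cases "i = a") simp_all
  then show ?thesis by simp
qed

lemma edge_sum_mult: "edge_sum E f * c = edge_sum E (\<lambda>i j. f i j * c)"
proof -
  have "\<And>i j. (if {i,j} \<in> E then f i j else 0) * c = (if {i,j} \<in> E then f i j * c else 0)" by simp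
  then show ?thesis unfolding edge_sum_def mult.assoc sum_distrib_right by simp
qed

lemma sum_fv_ab:
  fixes E :: "'n::finite set set"
  assumes "simple_graph E" "{a,b} \<in> E"
  shows "(\<Sum>y\<in>sign_vectors. fv E v y * (y a * y b)) = real (card (sign_vectors::('n\<Rightarrow>real) set)) * v {a,b}"
proof -
  let ?N = "real (card (sign_vectors::('n\<Rightarrow>real) set))"
  have ab: "a \<noteq> b" using sg_edge assms by blast
  have "(\<Sum>y\<in>sign_vectors. fv E v y * (y a * y b)) = 1/2 * (\<Sum>i\<in>UNIV. \<Sum>j\<in>UNIV. \<Sum>y\<in>sign_vectors.
           (if {i,j} \<in> E then v {i,j} * (y i * y j * (y a * y b)) else 0))"
  proof -
    have "\<And>y. fv E v y * (y a * y b) = 1/2 * (\<Sum>i\<in>UNIV. \<Sum>j\<in>UNIV. (if {i,j} \<in> E then v {i,j} * (y i * y j * (y a * y b)) else 0))"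
      unfolding edge_sum_mult by (simp add: edge_sum_def ac_simps cong: if_cong)
    then have "(\<Sum>y\<in>sign_vectors. fv E v y * (y a * y b)) = (\<Sum>y\<in>(sign_vectors::('n\<Rightarrow>real) set). 1/2 * (\<Sum>i\<in>UNIV. \<Sum>j\<in>UNIV. (if {i,j} \<in> E then v {i,j} * (y i * y j * (y a * y b)) else 0)))"
      by (rule sum.cong[OF refl])
    also have "\<dots> = 1/2 * (\<Sum>i\<in>UNIV. \<Sum>j\<in>UNIV. \<Sum>y\<in>sign_vectors.
           (if {i,j} \<in> E then v {i,j} * (y i * y j * (y a * y b)) else 0))"
      by (rule swap3) (auto simp: sv_finite)
    finally show ?thesis .
  qed
  also have "\<dots> = 1/2 * (\<Sum>i\<in>UNIV. \<Sum>j\<in>UNIV. (if i = a \<and> j = b then ?N * v {a,b} else 0)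
        + (if i = b \<and> j = a then ?N * v {a,b} else 0))"
  proof -
    have "(\<Sum>y\<in>sign_vectors. (if {i,j} \<in> E then v {i,j} * (y i * y j * (y a * y b)) else 0))
       = (if i = a \<and> j = b then ?N * v {a,b} else 0) + (if i = b \<and> j = a then ?N * v {a,b} else 0)" for i j
    proof (cases "{i,j} \<in> E")
      case True
      then have "i \<noteq> j" using sg_edge assms by blast
      have "(\<Sum>y\<in>(sign_vectors::('n\<Rightarrow>real) set). v {i,j} * (y i * y j * (y a * y b))) = v {i,j} * (\<Sum>y\<in>(sign_vectors::('n\<Rightarrow>real) set). y i * y j * (y a * y b))"
        by (simp add: sum_distrib_left)
      moreover have "v {i,j} = v {a,b}" if "i = b \<and> j = a" using that by (simp add: insert_commute)
      ultimately show ?thesis using True ab \<open>i \<noteq> j\<close> sum_prod4[OF \<open>i \<noteq> j\<close> ab] by auto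
    next
      case False
      have n1: "\<not> (i = a \<and> j = b)" using False assms(2) by blast
      have n2: "\<not> (i = b \<and> j = a)"
      proof
        assume "i = b \<and> j = a"
        then have "{i,j} = {a,b}" by auto
        then show False using False assms(2) by simp
      qed
      show ?thesis
        by (simp only: if_not_P[OF n1] if_not_P[OF n2] if_not_P[OF False] sum.neutral_const add_0)
    qed
    then show ?thesis by simp
  qed
  also have "\<dots> = ?N * v {a,b}"
    using ab by (simp add: sum.distrib delta2)
  finally show ?thesis .
qed

lemma ip_ge_fv: "y \<in> sign_vectors \<Longrightarrow> fv E v y \<le> ip E v"
  unfolding ip_def by (rule Max_ge) (auto simp: sv_finite)

lemma ip_attained: "\<exists>y\<in>sign_vectors. ip E v = fv E v y"
proof -
  have "ip E v \<in> (\<lambda>x. fv E v x) ` sign_vectors"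
    unfolding ip_def by (rule Max_in) (auto simp: sv_finite sv_ne)
  then show ?thesis by auto
qed

lemma card_sv_pos: "real (card (sign_vectors::('n::finite\<Rightarrow>real) set)) > 0"
  using sv_finite sv_ne by (simp add: card_gt_0_iff)

lemma pos_cancel0: "(N::real) > 0 \<Longrightarrow> 0 \<le> N * x \<Longrightarrow> 0 \<le> x"
  by (simp add: zero_le_mult_iff)
lemma pos_cancel1: "(N::real) > 0 \<Longrightarrow> N * a \<le> N * b \<Longrightarrow> a \<le> b"
  by simp

lemma ip_nonneg:
  fixes E :: "'n::finite set set"
  assumes "simple_graph E"
  shows "0 \<le> ip E v"
proof -
  have "(\<Sum>y\<in>sign_vectors. fv E v y) \<le> (\<Sum>y\<in>(sign_vectors::('n\<Rightarrow>real) set). ip E v)"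
    by (rule sum_mono) (rule ip_ge_fv)
  then have "0 \<le> real (card (sign_vectors::('n\<Rightarrow>real) set)) * ip E v"
    using sum_fv_zero[OF assms] by simp
  moreover have "real (card (sign_vectors::('n\<Rightarrow>real) set)) > 0" by (rule card_sv_pos)
  ultimately show ?thesis by (rule pos_cancel0[rotated])
qed

lemma ip_ge_edge:
  fixes E :: "'n::finite set set"
  assumes "simple_graph E" "{a,b} \<in> E"
  shows "\<bar>v {a,b}\<bar> \<le> ip E v"
proof -
  let ?N = "real (card (sign_vectors::('n\<Rightarrow>real) set))"
  define t :: real where "t = (if v {a,b} \<ge> 0 then 1 else -1)"
  have tv: "t * v {a,b} = \<bar>v {a,b}\<bar>" by (simp add: t_def)
  have tt: "\<bar>t\<bar> = 1" by (simp add: t_def)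
  have ab: "a \<noteq> b" using sg_edge assms by blast
  have "(\<Sum>y\<in>sign_vectors. fv E v y * (1 + t * (y a * y b)))
      = (\<Sum>y\<in>sign_vectors. fv E v y) + t * (\<Sum>y\<in>sign_vectors. fv E v y * (y a * y b))"
    by (simp add: algebra_simps sum.distrib sum_distrib_left)
  also have "\<dots> = ?N * \<bar>v {a,b}\<bar>"
    using sum_fv_zero[OF assms(1)] sum_fv_ab[OF assms] tv by (simp add: algebra_simps)
  finally have eq1: "(\<Sum>y\<in>sign_vectors. fv E v y * (1 + t * (y a * y b))) = ?N * \<bar>v {a,b}\<bar>" .
  have "(\<Sum>y\<in>sign_vectors. fv E v y * (1 + t * (y a * y b)))
      \<le> (\<Sum>y\<in>(sign_vectors::('n\<Rightarrow>real) set). ip E v * (1 + t * (y a * y b)))"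
  proof (rule sum_mono)
    fix y :: "'n \<Rightarrow> real" assume y: "y \<in> sign_vectors"
    have "\<bar>y a\<bar> = 1" "\<bar>y b\<bar> = 1" using sv_abs y by auto
    then have "\<bar>t * (y a * y b)\<bar> = 1" using tt by (simp add: abs_mult)
    then have "0 \<le> 1 + t * (y a * y b)" by linarith
    then show "fv E v y * (1 + t * (y a * y b)) \<le> ip E v * (1 + t * (y a * y b))"
      using ip_ge_fv[OF y] by (rule mult_right_mono[rotated])
  qed
  also have "\<dots> = (\<Sum>y\<in>(sign_vectors::('n\<Rightarrow>real) set). ip E v) + ip E v * t * (\<Sum>y\<in>(sign_vectors::('n\<Rightarrow>real) set). y a * y b)"
  proof -
    have "\<And>y. ip E v * (1 + t*(y a*y b)) = ip E v + (ip E v * t) * (y a * y b)" by (simp add: algebra_simps)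
    then have "(\<Sum>y\<in>(sign_vectors::('n\<Rightarrow>real) set). ip E v * (1 + t * (y a * y b)))
       = (\<Sum>y\<in>(sign_vectors::('n\<Rightarrow>real) set). ip E v + (ip E v * t) * (y a * y b))" by simp
    also have "\<dots> = (\<Sum>y\<in>(sign_vectors::('n\<Rightarrow>real) set). ip E v) + (ip E v * t) * (\<Sum>y\<in>(sign_vectors::('n\<Rightarrow>real) set). y a * y b)"
      by (simp add: sum.distrib sum_distrib_left)
    finally show ?thesis .
  qed
  also have "\<dots> = ?N * ip E v"
    using sum_prod2[OF ab] by simp
  finally have "?N * \<bar>v {a,b}\<bar> \<le> ?N * ip E v" using eq1 by simp
  moreover have "real (card (sign_vectors::('n\<Rightarrow>real) set)) > 0" by (rule card_sv_pos)
  ultimately show ?thesis by (rule pos_cancel1[rotated])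
qed



lemma edge_sum_mono:
  assumes "\<And>i j. {i,j} \<in> E \<Longrightarrow> f i j \<le> g i j"
  shows "edge_sum E f \<le> edge_sum E g"
  unfolding edge_sum_def
  by (intro mult_left_mono sum_mono) (auto simp: assms)

lemma edge_sum_abs_le:
  fixes E :: "'n::finite set set"
  assumes "simple_graph E"
  shows "edge_sum E (\<lambda>i j. \<bar>v {i,j}\<bar>) \<le> 1/2 * (real CARD('n) * real CARD('n)) * ip E v"
proof -
  have "edge_sum E (\<lambda>i j. \<bar>v {i,j}\<bar>) \<le> 1/2 * (\<Sum>i\<in>(UNIV::'n set). \<Sum>j\<in>(UNIV::'n set). ip E v)"
    unfolding edge_sum_def
    using ip_ge_edge[OF assms] ip_nonneg[OF assms]
    by (intro mult_left_mono sum_mono) auto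
  then show ?thesis by simp
qed

lemma unit_ex: "(\<lambda>_. axis k 1) \<in> {u :: 'n::finite \<Rightarrow> real^'n. \<forall>i. norm (u i) = 1}"
  by simp

lemma sdp_elem_le:
  fixes E :: "'n::finite set set"
  assumes "simple_graph E" "\<forall>i. norm (u i :: real^'n) = 1"
  shows "edge_sum E (\<lambda>i j. v {i,j} * (u i \<bullet> u j)) \<le> 1/2 * (real CARD('n) * real CARD('n)) * ip E v"
proof -
  have "edge_sum E (\<lambda>i j. v {i,j} * (u i \<bullet> u j)) \<le> edge_sum E (\<lambda>i j. \<bar>v {i,j}\<bar>)"
  proof (rule edge_sum_mono)
    fix i j
    have "\<bar>u i \<bullet> u j\<bar> \<le> 1" using Cauchy_Schwarz_ineq2[of "u i" "u j"] assms(2) by simp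
    then have "\<bar>v {i,j} * (u i \<bullet> u j)\<bar> \<le> \<bar>v {i,j}\<bar>"
      by (simp add: abs_mult mult_left_le)
    then show "v {i,j} * (u i \<bullet> u j) \<le> \<bar>v {i,j}\<bar>" by linarith
  qed
  then show ?thesis using edge_sum_abs_le[OF assms(1), of v] by linarith
qed

lemma sdp_le:
  fixes E :: "'n::finite set set"
  assumes "simple_graph E"
  shows "sdp E v \<le> 1/2 * (real CARD('n) * real CARD('n)) * ip E v"
  unfolding sdp_def
proof (rule cSup_least)
  show "(\<lambda>u. edge_sum E (\<lambda>i j. v {i,j} * (u i \<bullet> u j))) ` {u :: 'n \<Rightarrow> real^'n. \<forall>i. norm (u i) = 1} \<noteq> {}"
  proof -
    have "(\<lambda>_::'n. axis (undefined::'n) 1) \<in> {u :: 'n \<Rightarrow> real^'n. \<forall>i. norm (u i) = 1}" by simp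
    then have "{u :: 'n \<Rightarrow> real^'n. \<forall>i. norm (u i) = 1} \<noteq> {}" by (metis empty_iff)
    then show ?thesis by simp
  qed
qed (use sdp_elem_le[OF assms] in auto)

lemma sdp_bdd:
  fixes E :: "'n::finite set set"
  assumes "simple_graph E"
  shows "bdd_above ((\<lambda>u. edge_sum E (\<lambda>i j. v {i,j} * (u i \<bullet> u j)))
                 ` {u :: 'n \<Rightarrow> real^'n. \<forall>i. norm (u i) = 1})"
  unfolding bdd_above_def using sdp_elem_le[OF assms] by blast

lemma sdp_upper:
  fixes E :: "'n::finite set set"
  assumes "simple_graph E" "\<forall>i. norm (u i :: real^'n) = 1"
  shows "edge_sum E (\<lambda>i j. v {i,j} * (u i \<bullet> u j)) \<le> sdp E v"
  unfolding sdp_def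
  by (rule cSup_upper) (use assms sdp_bdd[OF assms(1)] in auto)

lemma sdp_ge_ip:
  fixes E :: "'n::finite set set"
  assumes "simple_graph E"
  shows "ip E v \<le> sdp E v"
proof -
  obtain y where y: "y \<in> sign_vectors" "ip E v = fv E v y" using ip_attained by blast
  define u :: "'n \<Rightarrow> real^'n" where "u i = y i *\<^sub>R axis undefined 1" for i
  have n: "\<forall>i. norm (u i) = 1" using sv_abs[OF y(1)] by (simp add: u_def)
  have "u i \<bullet> u j = y i * y j" for i j by (simp add: u_def)
  then have "ip E v = edge_sum E (\<lambda>i j. v {i,j} * (u i \<bullet> u j))" using y(2) by simp
  also have "\<dots> \<le> sdp E v" by (rule sdp_upper[OF assms n])
  finally show ?thesis .
qed

lemma kappa_bdd:
  fixes E :: "'n::finite set set"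
  assumes "simple_graph E"
  shows "bdd_above ((\<lambda>w. sdp E w / ip E w) ` (UNIV :: ('n set \<Rightarrow> real) set))"
proof -
  have "sdp E v / ip E v \<le> 1/2 * (real CARD('n) * real CARD('n))" for v
  proof (cases "ip E v = 0")
    case True then show ?thesis by simp
  next
    case False
    then have "ip E v > 0" using ip_nonneg[OF assms, of v] by simp
    then show ?thesis using sdp_le[OF assms, of v] by (simp add: divide_le_eq)
  qed
  then show ?thesis unfolding bdd_above_def by blast
qed

lemma kappa_upper:
  fixes E :: "'n::finite set set"
  assumes "simple_graph E"
  shows "sdp E v / ip E v \<le> kappa E"
  unfolding kappa_def by (rule cSup_upper) (use kappa_bdd[OF assms] in auto)

lemma kappa_ge1:
  fixes E :: "'n::finite set set"
  assumes "simple_graph E" "E \<noteq> {}"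
  shows "1 \<le> kappa E"
proof -
  obtain e where e: "e \<in> E" using assms(2) by blast
  then obtain a b where ab: "e = {a,b}" using assms(1) unfolding simple_graph_def
    by (metis card_2_iff)
  have "\<bar>(\<lambda>_. 1::real) {a,b}\<bar> \<le> ip E (\<lambda>_. 1)" by (rule ip_ge_edge[OF assms(1)]) (use e ab in simp)
  then have pos: "ip E (\<lambda>_. 1) > 0" by simp
  have "1 \<le> sdp E (\<lambda>_. 1) / ip E (\<lambda>_. 1)" using pos sdp_ge_ip[OF assms(1), of "\<lambda>_. 1"]
    by simp
  also have "\<dots> \<le> kappa E" by (rule kappa_upper[OF assms(1)])
  finally show ?thesis .
qed



lemma psd_sym: "psd X \<Longrightarrow> X $ i $ j = X $ j $ i"
  unfolding psd_def by (metis transpose_def vec_lambda_beta)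

lemma psd_inner_sym:
  assumes "psd X"
  shows "x \<bullet> (X *v y) = y \<bullet> (X *v x)"
proof -
  have "x \<bullet> (X *v y) = (x v* X) \<bullet> y" by (simp add: dot_lmul_matrix)
  also have "x v* X = transpose X *v x" by simp
  also have "transpose X = X" using assms by (simp add: psd_def)
  finally show ?thesis by (simp add: inner_commute)
qed

lemma quad_zero:
  fixes a b :: real
  assumes "\<And>t. 0 \<le> 2*t*a + t^2*b" "0 \<le> b"
  shows "a = 0"
proof -
  define s where "s = a / (b+1)"
  have as: "a = s * (b+1)" using assms(2) by (simp add: s_def)
  have "0 \<le> 2*(-s)*a + (-s)^2*b" by (rule assms(1))
  then have "0 \<le> - (s^2 * (b+2))" unfolding as by (simp add: algebra_simps power2_eq_square)
  moreover have "0 \<le> s^2 * (b+2)" using assms(2) by simp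
  ultimately have "s^2 * (b+2) = 0" by linarith
  then have "s = 0" using assms(2) by simp
  then show ?thesis using as by simp
qed

lemma psd_zero:
  assumes "psd X" "c \<bullet> (X *v c) = 0"
  shows "X *v c = 0"
proof -
  define y where "y = X *v c"
  have "\<And>t. 0 \<le> 2*t*(y \<bullet> y) + t^2*(y \<bullet> (X *v y))"
  proof -
    fix t :: real
    have "0 \<le> (c + t *\<^sub>R y) \<bullet> (X *v (c + t *\<^sub>R y))" using assms(1) by (simp add: psd_def)
    also have "\<dots> = c \<bullet> (X *v c) + t * (c \<bullet> (X *v y)) + t * (y \<bullet> (X *v c)) + t^2 * (y \<bullet> (X *v y))"
      by (simp add: matrix_vector_right_distrib inner_add_left inner_add_right
            matrix_vector_mult_scaleR algebra_simps power2_eq_square)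
    also have "c \<bullet> (X *v y) = y \<bullet> (X *v c)" by (rule psd_inner_sym[OF assms(1)])
    finally show "0 \<le> 2*t*(y \<bullet> y) + t^2*(y \<bullet> (X *v y))" using assms(2) by (simp add: y_def)
  qed
  moreover have "0 \<le> y \<bullet> (X *v y)" using assms(1) by (simp add: psd_def)
  ultimately have "y \<bullet> y = 0" by (rule quad_zero)
  then show ?thesis by (simp add: y_def)
qed



lemma axis_comp: "(axis a (1::real) :: real^'n::finite) $ k = (if k = a then 1 else 0)"
  by (simp add: axis_def)

lemma gram_induct:
  fixes X :: "real^'n::finite^'n"
  assumes X: "psd X" and fin: "finite S"
  shows "\<exists>u::'n \<Rightarrow> real^'n. (\<forall>i\<in>S. \<forall>j\<in>S. u i \<bullet> u j = X$i$j) \<and> (\<forall>i. i\<notin>S \<longrightarrow> u i = 0)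
           \<and> (\<forall>i\<in>S. \<forall>k. k\<notin>S \<longrightarrow> u i $ k = 0)"
  using fin
proof induct
  case empty
  show ?case by (rule exI[of _ "\<lambda>_. 0"]) simp
next
  case (insert a S)
  obtain u :: "'n \<Rightarrow> real^'n" where u1: "\<forall>i\<in>S. \<forall>j\<in>S. u i \<bullet> u j = X$i$j" and u0: "\<forall>i. i\<notin>S \<longrightarrow> u i = 0"
    and usup: "\<forall>i\<in>S. \<forall>k. k\<notin>S \<longrightarrow> u i $ k = 0"
    using insert.hyps(3) by blast
  have aS: "a \<notin> S" by fact
  define U :: "real^'n^'n" where "U = (\<chi> k j. u j $ k)"
  define Phi where "Phi = (\<lambda>c. U *v c)"
  have linPhi: "linear Phi" unfolding Phi_def by simp
  have PhiS: "Phi c = (\<Sum>j\<in>UNIV. c$j *\<^sub>R u j)" for c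
    by (simp add: Phi_def U_def vec_eq_iff matrix_vector_mult_def mult.commute)
  have Phi_ax: "Phi (axis j 1) = u j" for j
  proof -
    have "Phi (axis j 1) = (\<Sum>l\<in>UNIV. if l = j then u l else 0)"
      unfolding PhiS by (rule sum.cong) (auto simp: axis_comp)
    then show ?thesis by simp
  qed
  define cut where "cut c = (\<chi> j. if j\<in>S then c$j else 0)" for c :: "real^'n"
  have inner_u: "u j \<bullet> u l = (if j\<in>S \<and> l\<in>S then X$j$l else 0)" for j l
    using u1 u0 by auto
  have bil: "Phi c \<bullet> Phi d = cut c \<bullet> (X *v cut d)" for c d
  proof -
    have ud: "u j \<bullet> Phi d = (\<Sum>l\<in>UNIV. d$l * (u j \<bullet> u l))" for j
      by (simp add: PhiS[of d] inner_sum_right)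
    have "Phi c \<bullet> Phi d = (\<Sum>j\<in>UNIV. c$j * (u j \<bullet> Phi d))"
      by (simp add: PhiS[of c] inner_sum_left)
    also have "\<dots> = (\<Sum>j\<in>UNIV. \<Sum>l\<in>UNIV. c$j * (d$l * (u j \<bullet> u l)))"
      by (simp add: ud sum_distrib_left)
    also have "\<dots> = (\<Sum>j\<in>UNIV. \<Sum>l\<in>UNIV. cut c $ j * (X$j$l * cut d $ l))"
      by (intro sum.cong refl) (simp add: inner_u cut_def)
    also have "\<dots> = cut c \<bullet> (X *v cut d)"
      by (simp add: inner_vec_def matrix_vector_mult_def sum_distrib_left)
    finally show ?thesis .
  qed
  define r :: "real^'n" where "r = (\<chi> j. if j\<in>S then X$a$j else 0)"
  have cr: "c \<bullet> r = (X *v cut c) $ a" for c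
    unfolding inner_vec_def matrix_vector_mult_def r_def cut_def
    by (simp, intro sum.cong refl) auto
  have r_perp: "r \<in> (Phi -` {0})\<^sup>\<bottom>"
    unfolding orthogonal_comp_def orthogonal_def
  proof (clarify)
    fix c assume "Phi c = 0"
    then have "cut c \<bullet> (X *v cut c) = 0" using bil[of c c] by simp
    then have "X *v cut c = 0" by (rule psd_zero[OF X])
    then show "c \<bullet> r = 0" by (simp add: cr)
  qed
  have "Phi -` {0} = (range (adjoint Phi))\<^sup>\<bottom>" by (rule ker_orthogonal_comp_adjoint[OF linPhi])
  moreover have "subspace (range (adjoint Phi))"
    by (rule linear_subspace_image[OF adjoint_linear[OF linPhi] subspace_UNIV])
  ultimately have "r \<in> range (adjoint Phi)" using r_perp orthogonal_comp_self by metis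
  then obtain w0 where w0: "r = adjoint Phi w0" by blast
  have uw0: "u j \<bullet> w0 = X$a$j" if "j\<in>S" for j
  proof -
    have "r $ j = axis j 1 \<bullet> adjoint Phi w0" using w0 by (simp add: inner_axis')
    also have "\<dots> = Phi (axis j 1) \<bullet> w0" by (rule adjoint_works[OF linPhi])
    finally show ?thesis using that by (simp add: Phi_ax r_def)
  qed
  have subR: "subspace (range Phi)" by (rule linear_subspace_image[OF linPhi subspace_UNIV])
  obtain y z where y: "y \<in> span (range Phi)" and z: "\<And>w. w \<in> span (range Phi) \<Longrightarrow> orthogonal z w"
    and yz: "w0 = y + z"
    using orthogonal_subspace_decomp_exists[of "range Phi" w0] by blast
  have spanR: "span (range Phi) = range Phi" using subR by (simp only: span_eq_iff)
  have "y \<in> range Phi" using y spanR by simp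
  then obtain c where yc: "y = Phi c" by blast
  have uy: "u j \<bullet> y = X$a$j" if "j\<in>S" for j
  proof -
    have "u j \<in> span (range Phi)" unfolding spanR using Phi_ax[of j] by (metis rangeI)
    then have "z \<bullet> u j = 0" using z orthogonal_def by blast
    then show ?thesis using uw0[OF that] yz by (simp add: inner_add_right inner_commute)
  qed
  have ysup: "y $ k = 0" if "k\<notin>S" for k
  proof -
    have "y $ k = (\<Sum>j\<in>UNIV. c$j * u j $ k)" by (simp add: yc PhiS)
    also have "\<dots> = 0" by (rule sum.neutral) (use usup u0 that in auto)
    finally show ?thesis .
  qed
  have yy1: "y \<bullet> y = c \<bullet> r"
  proof -
    have "y \<bullet> y = Phi c \<bullet> y" by (simp add: yc)
    also have "\<dots> = (\<Sum>j\<in>UNIV. c$j * (u j \<bullet> y))" by (simp add: PhiS inner_sum_left)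
    also have "\<dots> = (\<Sum>j\<in>UNIV. c$j * r$j)"
      by (rule sum.cong) (use uy u0 in \<open>auto simp: r_def\<close>)
    also have "\<dots> = c \<bullet> r" by (simp add: inner_vec_def)
    finally show ?thesis .
  qed
  have yy2: "y \<bullet> y = cut c \<bullet> (X *v cut c)" using bil[of c c] yc by simp
  have yy_le: "y \<bullet> y \<le> X$a$a"
  proof -
    define e :: "real^'n" where "e = axis a 1"
    have Xe: "e \<bullet> (X *v e) = X$a$a"
      by (simp add: e_def inner_axis' matrix_vector_mult_basis column_def)
    have ec: "e \<bullet> (X *v cut c) = c \<bullet> r" by (simp add: e_def inner_axis' cr)
    have ce: "cut c \<bullet> (X *v e) = c \<bullet> r" using psd_inner_sym[OF X, of "cut c" e] ec by simp
    have "0 \<le> (cut c - e) \<bullet> (X *v (cut c - e))" using X by (simp add: psd_def)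
    also have "\<dots> = cut c \<bullet> (X *v cut c) - cut c \<bullet> (X *v e) - e \<bullet> (X *v cut c) + e \<bullet> (X *v e)"
      by (simp add: matrix_vector_mult_diff_distrib inner_diff_left inner_diff_right)
    finally show ?thesis using Xe ec ce yy1 yy2 by linarith
  qed
  define t where "t = sqrt (X$a$a - y \<bullet> y)"
  have tt: "t * t = X$a$a - y \<bullet> y" using yy_le by (simp add: t_def)
  define u' where "u' = u(a := y + t *\<^sub>R axis a 1)"
  have ua: "u j $ a = 0" if "j \<in> S" for j using usup aS that by blast
  have ya: "y $ a = 0" using ysup aS by blast
  have caa: "u' a \<bullet> u' a = X$a$a"
  proof -
    have "u' a \<bullet> u' a = y \<bullet> y + 2 * t * (y $ a) + t * t"
      by (simp add: u'_def inner_add_left inner_add_right inner_axis inner_axis' algebra_simps)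
    then show ?thesis using ya tt by simp
  qed
  have caj: "u' a \<bullet> u' j = X$a$j" if "j \<in> S" for j
  proof -
    have ja: "j \<noteq> a" using that aS by blast
    have "u' a \<bullet> u' j = u j \<bullet> y + t * (u j $ a)"
      using ja by (simp add: u'_def inner_add_left inner_axis' inner_commute[of y])
    then show ?thesis using uy[OF that] ua[OF that] by simp
  qed
  show ?case
  proof (intro exI[of _ u'] conjI ballI allI impI)
    fix i j assume i: "i \<in> insert a S" and j: "j \<in> insert a S"
    show "u' i \<bullet> u' j = X$i$j"
    proof (cases "i = a")
      case True
      show ?thesis
      proof (cases "j = a")
        case True
        then show ?thesis using \<open>i = a\<close> caa by simp
      next
        case False
        then show ?thesis using \<open>i = a\<close> j caj by simp
      qed
    next
      case False
      then have iS: "i \<in> S" using i by simp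
      show ?thesis
      proof (cases "j = a")
        case True
        then show ?thesis using caj[OF iS] iS psd_sym[OF X, of a i] by (simp add: inner_commute)
      next
        case False
        then show ?thesis using \<open>i \<noteq> a\<close> iS j u1 by (simp add: u'_def)
      qed
    qed
  next
    fix i assume "i \<notin> insert a S"
    then show "u' i = 0" using u0 by (simp add: u'_def)
  next
    fix i k assume i: "i \<in> insert a S" and k: "k \<notin> insert a S"
    show "u' i $ k = 0"
    proof (cases "i = a")
      case True
      then show ?thesis using k ysup by (simp add: u'_def axis_comp)
    next
      case False
      then show ?thesis using i k usup by (simp add: u'_def)
    qed
  qed
qed

lemma gram:
  fixes X :: "real^'n::finite^'n"
  assumes "psd X"
  shows "\<exists>u::'n \<Rightarrow> real^'n. \<forall>i j. u i \<bullet> u j = X$i$j"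
  using gram_induct[OF assms, of UNIV] by auto



lemma edge_sum_split:
  "edge_sum E (\<lambda>i j. w {i,j} * (1 - m i j)) = edge_sum E (\<lambda>i j. w {i,j}) + edge_sum E (\<lambda>i j. - w {i,j} * m i j)"
proof -
  have "\<And>i j. (if {i,j} \<in> E then w {i,j} * (1 - m i j) else 0)
     = (if {i,j} \<in> E then w {i,j} else 0) + (if {i,j} \<in> E then - w {i,j} * m i j else 0)"
    by (simp add: algebra_simps)
  then show ?thesis unfolding edge_sum_def by (simp add: sum.distrib algebra_simps)
qed

lemma card_pairs:
  assumes "card (e :: 'n set) = 2"
  shows "card {p :: 'n \<times> 'n. {fst p, snd p} = e} = 2"
proof -
  obtain a b where ab: "a \<noteq> b" "e = {a,b}" using assms by (metis card_2_iff)
  have "{p :: 'n \<times> 'n. {fst p, snd p} = e} = {(a,b),(b,a)}"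
    using ab by (auto simp: doubleton_eq_iff)
  then show ?thesis using ab by simp
qed

lemma edge_sum_W:
  fixes E :: "'n::finite set set"
  assumes "simple_graph E"
  shows "edge_sum E (\<lambda>i j. w {i,j}) = (\<Sum>e\<in>E. w e)"
proof -
  define g :: "'n \<times> 'n \<Rightarrow> 'n set" where "g p = {fst p, snd p}" for p
  define P where "P = {p. g p \<in> E}"
  have "(\<Sum>i\<in>(UNIV::'n set). \<Sum>j\<in>(UNIV::'n set). if {i,j} \<in> E then w {i,j} else 0)
      = (\<Sum>p\<in>(UNIV::('n \<times> 'n) set). if g p \<in> E then w (g p) else 0)"
    by (simp add: sum.cartesian_product g_def case_prod_beta UNIV_Times_UNIV[symmetric] del: UNIV_Times_UNIV cong: if_cong)
  also have "\<dots> = (\<Sum>p\<in>P. w (g p))"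
    unfolding P_def by (simp add: sum.inter_filter[symmetric])
  also have "\<dots> = (\<Sum>e\<in>E. \<Sum>p\<in>{p. p \<in> P \<and> g p = e}. w (g p))"
    by (rule sum.group[symmetric]) (auto simp: P_def)
  also have "\<dots> = (\<Sum>e\<in>E. w e * 2)"
  proof (rule sum.cong[OF refl])
    fix e assume e: "e \<in> E"
    have "{p. p \<in> P \<and> g p = e} = {p. {fst p, snd p} = e}" using e by (auto simp: P_def g_def)
    moreover have "card {p :: 'n \<times> 'n. {fst p, snd p} = e} = 2"
      using assms e unfolding simple_graph_def by (intro card_pairs) blast
    ultimately have "(\<Sum>p\<in>{p. p \<in> P \<and> g p = e}. w (g p)) = (\<Sum>p\<in>{p. p \<in> P \<and> g p = e}. w e)"
      by (intro sum.cong refl) (simp add: g_def)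
    also have "\<dots> = w e * 2" using \<open>card {p :: 'n \<times> 'n. {fst p, snd p} = e} = 2\<close>
      \<open>{p. p \<in> P \<and> g p = e} = {p. {fst p, snd p} = e}\<close> by simp
    finally show "(\<Sum>p\<in>{p. p \<in> P \<and> g p = e}. w (g p)) = w e * 2" .
  qed
  finally show ?thesis unfolding edge_sum_def by (simp add: sum_distrib_right[symmetric])
qed

lemma mc_eq:
  fixes E :: "'n::finite set set"
  shows "mc E w = 1/2 * (edge_sum E (\<lambda>i j. w {i,j}) + ip E (\<lambda>e. - w e))"
proof -
  define W where "W = edge_sum E (\<lambda>i j. w {i,j})"
  define A where "A = (\<lambda>x. fv E (\<lambda>e. - w e) x) ` (sign_vectors :: ('n \<Rightarrow> real) set)"
  define f where "f = (\<lambda>t::real. 1/2 * (W + t))"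
  have img: "(\<lambda>x. (1/2) * edge_sum E (\<lambda>i j. w {i,j} * (1 - x i * x j))) ` (sign_vectors :: ('n \<Rightarrow> real) set)
      = f ` A"
    unfolding A_def f_def W_def image_image edge_sum_split[of E w] by simp
  have "mono f" by (simp add: mono_def f_def)
  moreover have "finite A" "A \<noteq> {}" using sv_finite sv_ne by (auto simp: A_def)
  ultimately have "f (Max A) = Max (f ` A)" by (rule mono_Max_commute)
  then have "mc E w = f (Max A)" unfolding mc_def img by simp
  then show ?thesis unfolding f_def W_def A_def ip_def by simp
qed

lemma mc_empty:
  fixes E :: "'n::finite set set"
  assumes "E = {}"
  shows "mc E w = 0"
proof -
  have "edge_sum E f = 0" for f using assms by (simp add: edge_sum_def)
  moreover have "ip E v = 0" for v
  proof -
    have "ip E v = Max ((\<lambda>x. 0::real) ` (sign_vectors :: ('n \<Rightarrow> real) set))"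
      unfolding ip_def using \<open>\<And>f. edge_sum E f = 0\<close> by simp
    also have "(\<lambda>x. 0::real) ` (sign_vectors :: ('n \<Rightarrow> real) set) = {0}" using sv_ne by auto
    then have "Max ((\<lambda>x. 0::real) ` (sign_vectors :: ('n \<Rightarrow> real) set)) = 0" by simp
    finally show ?thesis .
  qed
  ultimately show ?thesis by (simp add: mc_eq)
qed

lemma frob_lap:
  fixes E :: "'n::finite set set"
  assumes "simple_graph E" "\<forall>i. X $ i $ i = 1"
  shows "frob (laplacian E w) X = 2 * edge_sum E (\<lambda>i j. w {i,j} * (1 - X $ i $ j))"
proof -
  define D where "D i = (\<Sum>k\<in>{k. {i,k} \<in> E}. w {i,k})" for i
  have D': "D i = (\<Sum>j\<in>UNIV. if {i,j} \<in> E then w {i,j} else 0)" for i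
    unfolding D_def by (simp add: sum.inter_filter[symmetric])
  have row: "(\<Sum>j\<in>UNIV. laplacian E w $ i $ j * X $ i $ j)
      = (\<Sum>j\<in>UNIV. if {i,j} \<in> E then w {i,j} * (1 - X $ i $ j) else 0)" for i
  proof -
    have "\<And>j. laplacian E w $ i $ j * X $ i $ j
        = (if j = i then D i else 0) + (if {i,j} \<in> E then - w {i,j} * X $ i $ j else 0)"
    proof -
      fix j
      show "laplacian E w $ i $ j * X $ i $ j
        = (if j = i then D i else 0) + (if {i,j} \<in> E then - w {i,j} * X $ i $ j else 0)"
      proof (cases "j = i")
        case True
        have "{i,i} \<notin> E" using sg_edge[OF assms(1)] by blast
        then show ?thesis using True assms(2) by (simp add: laplacian_def D_def)
      next
        case False
        then show ?thesis by (simp add: laplacian_def)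
      qed
    qed
    then have "(\<Sum>j\<in>UNIV. laplacian E w $ i $ j * X $ i $ j)
        = (\<Sum>j\<in>UNIV. (if j = i then D i else 0)) + (\<Sum>j\<in>UNIV. if {i,j} \<in> E then - w {i,j} * X $ i $ j else 0)"
      by (simp add: sum.distrib)
    also have "\<dots> = D i + (\<Sum>j\<in>UNIV. if {i,j} \<in> E then - w {i,j} * X $ i $ j else 0)"
      by simp
    also have "\<dots> = (\<Sum>j\<in>UNIV. if {i,j} \<in> E then w {i,j} * (1 - X $ i $ j) else 0)"
      unfolding D' sum.distrib[symmetric] by (intro sum.cong refl) (simp add: algebra_simps)
    finally show ?thesis .
  qed
  show ?thesis unfolding frob_def edge_sum_def row by simp
qed

lemma psd_mat1: "psd (mat 1 :: real^'n::finite^'n)"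
  by (simp add: psd_def matrix_vector_mul_lid)



theorem mainTheorem3:
  fixes E :: "'n::finite set set" and w :: "'n set \<Rightarrow> real"
  assumes "simple_graph E"
    and "(\<Sum>e\<in>E. w e) \<ge> 0"
    and "mc E w > 0"
  shows "sdp_GW E w \<le> kappa E * mc E w"
proof -
  note sg = assms(1)
  define W where "W = edge_sum E (\<lambda>i j. w {i,j})"
  define w' where "w' = (\<lambda>e. - w e)"
  have W0: "0 \<le> W" using edge_sum_W[OF sg, of w] assms(2) by (simp add: W_def)
  have Ene: "E \<noteq> {}" using mc_empty[of E w] assms(3) by auto
  have k1: "1 \<le> kappa E" by (rule kappa_ge1[OF sg Ene])
  have mc: "mc E w = 1/2 * (W + ip E w')" by (simp add: mc_eq W_def w'_def)
  have gw: "sdp_GW E w \<le> 1/2 * (W + sdp E w')"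
    unfolding sdp_GW_def
  proof (rule cSup_least)
    have "mat 1 \<in> (elliptope :: (real^'n^'n) set)"
      using psd_mat1 by (simp add: elliptope_def mat_def)
    then show "(\<lambda>X. (1/4) * frob (laplacian E w) X) ` (elliptope :: (real^'n^'n) set) \<noteq> {}" by blast
  next
    fix r assume "r \<in> (\<lambda>X. (1/4) * frob (laplacian E w) X) ` (elliptope :: (real^'n^'n) set)"
    then obtain X :: "real^'n^'n" where X: "X \<in> elliptope" and r: "r = (1/4) * frob (laplacian E w) X" by blast
    have psdX: "psd X" and diag: "\<forall>i. X $ i $ i = 1" using X by (auto simp: elliptope_def)
    obtain u :: "'n \<Rightarrow> real^'n" where u: "\<And>i j. u i \<bullet> u j = X $ i $ j" using gram[OF psdX] by blast
    have nu: "\<forall>i. norm (u i) = 1" using u diag by (simp add: norm_eq_sqrt_inner)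
    have "r = 1/2 * edge_sum E (\<lambda>i j. w {i,j} * (1 - X $ i $ j))"
      using r frob_lap[OF sg diag, of w] by simp
    also have "\<dots> = 1/2 * (W + edge_sum E (\<lambda>i j. - w {i,j} * X $ i $ j))"
      by (simp add: edge_sum_split[of E w] W_def)
    also have "edge_sum E (\<lambda>i j. - w {i,j} * X $ i $ j) = edge_sum E (\<lambda>i j. w' {i,j} * (u i \<bullet> u j))"
      by (simp add: u w'_def)
    also have "\<dots> \<le> sdp E w'" by (rule sdp_upper[OF sg nu])
    finally show "r \<le> 1/2 * (W + sdp E w')" by simp
  qed
  have sk: "sdp E w' \<le> kappa E * ip E w'"
  proof (cases "ip E w' = 0")
    case True
    then show ?thesis using sdp_le[OF sg, of w'] by simp
  next
    case False
    then have pos: "ip E w' > 0" using ip_nonneg[OF sg, of w'] by simp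
    have "sdp E w' / ip E w' \<le> kappa E" by (rule kappa_upper[OF sg])
    then show ?thesis using pos by (simp add: divide_le_eq)
  qed
  have "W \<le> kappa E * W" using k1 W0 by (simp add: mult_le_cancel_right1)
  then have "1/2 * (W + sdp E w') \<le> kappa E * (1/2 * (W + ip E w'))"
    using sk by (simp add: algebra_simps)
  then have "sdp_GW E w \<le> kappa E * (1/2 * (W + ip E w'))" using gw by linarith
  then show ?thesis unfolding mc .
qed


end
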